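(* Let $s\ge0$ and let $(X_1,X_2,X_3,Y,U_1,U_2,U_3,U_4)$ have joint distribution factorizing as $$P_{X_1,X_2,X_3,Y}\,P_{U_1|X_1}\,P_{U_2|X_2}\,P_{U_3|X_3}\,P_{U_4|U_2,U_3}.$$ Then, with $\mathbf P=\{P_{U_1|X_1},P_{U_2|X_2},P_{U_3|X_3}\}$, $$\mathcal L_s(\mathbf P)\ \ge\ \mathcal L_s^{\rm low}(\mathbf P,P_{U_4|U_2,U_3}),$$ where $$\mathcal L_s(\mathbf P)=-H(Y|U_1,U_2,U_3)-s\big[I(X_1,X_2,X_3;U_1,U_2,U_3)+I(X_2,X_3;U_2,U_3|U_1)\big]$$ and $$\mathcal L_s^{\rm low}(\mathbf P,P_{U_4|U_2,U_3})=-H(Y|U_1,U_4)-sI(X_1;U_1)-2s\big[I(X_2;U_2)+I(X_3;U_3)\big]+2s\big[I(U_2;U_1)+I(U_3;U_1,U_2)\big].$$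
   Context: All random variables take values in finite sets; all information quantities are computed under the stated joint distribution. *)

theory Defs
  imports "HOL-Analysis.Analysis"
begin

text \<open>Discrete information measures (in bits) for random variables defined as
functions f of the outcome of a finite sample space carrying a pmf J.
Convention 0 log 0 = 0.\<close>

definition ent :: "('a::finite \<Rightarrow> real) \<Rightarrow> ('a \<Rightarrow> 'b) \<Rightarrow> real" where
  "ent J f = - (\<Sum>b\<in>f ` UNIV. (let m = (\<Sum>a\<in>{a. f a = b}. J a) in
                                  if m = 0 then 0 else m * log 2 m))"

definition cond_ent :: "('a::finite \<Rightarrow> real) \<Rightarrow> ('a \<Rightarrow> 'b) \<Rightarrow> ('a \<Rightarrow> 'c) \<Rightarrow> real" where
  "cond_ent J f g = ent J (\<lambda>a. (f a, g a)) - ent J g"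

definition mut_inf :: "('a::finite \<Rightarrow> real) \<Rightarrow> ('a \<Rightarrow> 'b) \<Rightarrow> ('a \<Rightarrow> 'c) \<Rightarrow> real" where
  "mut_inf J f g = ent J f + ent J g - ent J (\<lambda>a. (f a, g a))"

definition cond_mut_inf :: "('a::finite \<Rightarrow> real) \<Rightarrow> ('a \<Rightarrow> 'b) \<Rightarrow> ('a \<Rightarrow> 'c) \<Rightarrow> ('a \<Rightarrow> 'd) \<Rightarrow> real" where
  "cond_mut_inf J f g h = ent J (\<lambda>a. (f a, h a)) + ent J (\<lambda>a. (g a, h a))
                          - ent J (\<lambda>a. (f a, g a, h a)) - ent J h"

definition is_pmf :: "('a::finite \<Rightarrow> real) \<Rightarrow> bool" where
  "is_pmf p \<longleftrightarrow> (\<forall>a. 0 \<le> p a) \<and> (\<Sum>a\<in>UNIV. p a) = 1"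

definition is_kernel :: "('a \<Rightarrow> 'b::finite \<Rightarrow> real) \<Rightarrow> bool" where
  "is_kernel K \<longleftrightarrow> (\<forall>a. is_pmf (K a))"

end

theory Submission
  imports Defs
begin

definition dd :: "('a::finite \<Rightarrow> real) \<Rightarrow> ('a \<Rightarrow> 'b) \<Rightarrow> 'b \<Rightarrow> real" where
  "dd J f b = sum J {a. f a = b}"

lemma ent_pw: "ent J f = - (\<Sum>a\<in>UNIV. J a * log 2 (dd J f (f a)))"
proof -
  have "(\<Sum>a\<in>UNIV. J a * log 2 (dd J f (f a)))
     = (\<Sum>b\<in>f ` UNIV. \<Sum>a\<in>{x. x \<in> UNIV \<and> f x = b}. J a * log 2 (dd J f (f a)))"
    by (rule sum.image_gen) simp
  also have "\<dots> = (\<Sum>b\<in>f ` UNIV. dd J f b * log 2 (dd J f b))"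
  proof (rule sum.cong[OF refl])
    fix b
    have "(\<Sum>a\<in>{x. x \<in> UNIV \<and> f x = b}. J a * log 2 (dd J f (f a)))
        = (\<Sum>a\<in>{x. f x = b}. J a * log 2 (dd J f b))" by (rule sum.cong) auto
    also have "\<dots> = dd J f b * log 2 (dd J f b)" by (simp add: dd_def sum_distrib_right)
    finally show "(\<Sum>a\<in>{x. x \<in> UNIV \<and> f x = b}. J a * log 2 (dd J f (f a))) = dd J f b * log 2 (dd J f b)" .
  qed
  finally have X: "(\<Sum>a\<in>UNIV. J a * log 2 (dd J f (f a))) = (\<Sum>b\<in>f ` UNIV. dd J f b * log 2 (dd J f b))" .
  have hh: "\<And>m::real. (if m = 0 then 0 else m * log 2 m) = m * log 2 m" by simp
  show ?thesis unfolding ent_def Let_def hh using X by (simp add: dd_def)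
qed

lemma dd_pos: assumes "\<forall>x. J x \<ge> 0" "J a \<noteq> 0" shows "dd J f (f a) > 0"
proof -
  have "J a \<le> dd J f (f a)" unfolding dd_def
    by (rule member_le_sum) (use assms in auto)
  moreover have "J a > 0" using assms by (metis order_le_neq_trans)
  ultimately show ?thesis by linarith
qed

lemma ent_cong: assumes "\<And>a a'. (f a = f a') = (g a = g a')" shows "ent J f = ent J g"
proof -
  have "\<And>a. dd J f (f a) = dd J g (g a)" unfolding dd_def using assms by metis
  then show ?thesis unfolding ent_pw by simp
qed

lemma ent_factor:
  assumes nn: "\<forall>x. J x \<ge> 0"
    and h: "\<And>a. J a \<noteq> 0 \<Longrightarrow> dd J f (f a) = dd J g (g a) * k a \<and> k a > 0"
  shows "ent J f = ent J g - (\<Sum>a\<in>UNIV. J a * log 2 (k a))"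
proof -
  have "J a * log 2 (dd J f (f a)) = J a * log 2 (dd J g (g a)) + J a * log 2 (k a)" for a
  proof (cases "J a = 0")
    case False
    then have "dd J g (g a) > 0" using dd_pos[OF nn] by blast
    with h[OF False] show ?thesis by (simp add: log_mult distrib_left)
  qed simp
  then show ?thesis unfolding ent_pw by (simp add: sum.distrib)
qed

lemma sum_log_mult:
  assumes "\<And>a. J a \<noteq> 0 \<Longrightarrow> k1 a > 0 \<and> k2 a > 0"
  shows "(\<Sum>a\<in>UNIV. J a * log 2 (k1 a * k2 a)) = (\<Sum>a\<in>UNIV. J a * log 2 (k1 a)) + (\<Sum>a\<in>UNIV. J a * log 2 (k2 a))"
proof -
  have "J a * log 2 (k1 a * k2 a) = J a * log 2 (k1 a) + J a * log 2 (k2 a)" for a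
    using assms[of a] by (cases "J a = 0") (auto simp: log_mult distrib_left)
  then show ?thesis by (simp add: sum.distrib)
qed

lemma marg1: "(\<Sum>b\<in>range f. dd J (\<lambda>a. (f a, g a)) (b, c)) = dd J g c"
proof -
  have "(\<Sum>b\<in>range f. sum J {x. x \<in> {a. g a = c} \<and> f x = b}) = sum J {a. g a = c}"
    by (rule sum.group) auto
  moreover have "\<And>b. {x. x \<in> {a. g a = c} \<and> f x = b} = {a. (f a, g a) = (b, c)}" by auto
  ultimately show ?thesis unfolding dd_def by simp
qed

lemma marg2: "(\<Sum>d\<in>range h. dd J (\<lambda>a. (g a, h a)) (c, d)) = dd J g c"
proof -
  have "(\<Sum>b\<in>range h. sum J {x. x \<in> {a. g a = c} \<and> h x = b}) = sum J {a. g a = c}"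
    by (rule sum.group) auto
  moreover have "\<And>b. {x. x \<in> {a. g a = c} \<and> h x = b} = {a. (g a, h a) = (c, b)}" by auto
  ultimately show ?thesis unfolding dd_def by simp
qed

lemma tot: "(\<Sum>c\<in>range g. dd J g c) = (\<Sum>a\<in>UNIV. J a)"
proof -
  have "(\<Sum>c\<in>range g. sum J {x. x \<in> UNIV \<and> g x = c}) = sum J UNIV"
    by (rule sum.group) auto
  then show ?thesis unfolding dd_def by simp
qed

lemma fiber: "(\<Sum>a\<in>UNIV. J a * F (V a)) = (\<Sum>v\<in>range V. dd J V v * F v)"
proof -
  have "(\<Sum>a\<in>UNIV. J a * F (V a)) = (\<Sum>v\<in>range V. \<Sum>a\<in>{x. x \<in> UNIV \<and> V x = v}. J a * F (V a))"
    by (rule sum.image_gen) simp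
  also have "\<dots> = (\<Sum>v\<in>range V. dd J V v * F v)"
  proof (rule sum.cong[OF refl])
    fix v
    have "(\<Sum>a\<in>{x. x \<in> UNIV \<and> V x = v}. J a * F (V a)) = (\<Sum>a\<in>{x. V x = v}. J a * F v)"
      by (rule sum.cong) auto
    then show "(\<Sum>a\<in>{x. x \<in> UNIV \<and> V x = v}. J a * F (V a)) = dd J V v * F v"
      by (simp add: dd_def sum_distrib_right)
  qed
  finally show ?thesis .
qed

lemma dd_nn: "\<forall>x. J x \<ge> 0 \<Longrightarrow> dd J f b \<ge> 0"
  unfolding dd_def by (simp add: sum_nonneg)

lemma key:
  fixes f :: "'a::finite \<Rightarrow> 'b" and g :: "'a \<Rightarrow> 'c" and h :: "'a \<Rightarrow> 'd"
  assumes nn: "\<forall>x. J x \<ge> 0"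
  defines "P3 \<equiv> dd J (\<lambda>a. (f a, g a, h a))"
    and "P2 \<equiv> dd J (\<lambda>a. (f a, g a))" and "Q2 \<equiv> dd J (\<lambda>a. (g a, h a))" and "P1 \<equiv> dd J g"
  shows "(\<Sum>a\<in>UNIV. J a * (P2 (f a, g a) * Q2 (g a, h a) / (P3 (f a, g a, h a) * P1 (g a))))
        \<le> (\<Sum>a\<in>UNIV. J a)"
proof -
  define V where "V = (\<lambda>a. (f a, g a, h a))"
  define G where "G = (\<lambda>(b,c,d). P2 (b, c) * Q2 (c, d) / P1 c)"
  have Gnn: "G v \<ge> 0" for v
    unfolding G_def P2_def Q2_def P1_def
    by (auto split: prod.splits intro!: divide_nonneg_nonneg mult_nonneg_nonneg dd_nn[OF nn])
  have "(\<Sum>a\<in>UNIV. J a * (P2 (f a, g a) * Q2 (g a, h a) / (P3 (f a, g a, h a) * P1 (g a))))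
      = (\<Sum>a\<in>UNIV. J a * ((\<lambda>v. G v / P3 v) (V a)))"
    unfolding G_def V_def by (simp add: divide_divide_eq_left mult.commute)
  also have "\<dots> = (\<Sum>v\<in>range V. dd J V v * (G v / P3 v))" by (rule fiber)
  also have "\<dots> \<le> (\<Sum>v\<in>range V. G v)"
    by (rule sum_mono) (auto simp: P3_def V_def[symmetric] Gnn)
  also have "\<dots> \<le> (\<Sum>v\<in>range f \<times> range g \<times> range h. G v)"
    by (rule sum_mono2) (auto simp: V_def Gnn)
  also have "\<dots> = (\<Sum>b\<in>range f. \<Sum>c\<in>range g. \<Sum>d\<in>range h. P2 (b, c) * Q2 (c, d) / P1 c)"
    unfolding G_def by (simp add: sum.cartesian_product)
  also have "\<dots> = (\<Sum>b\<in>range f. \<Sum>c\<in>range g. P2 (b, c) * (P1 c / P1 c))"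
    by (simp add: sum_divide_distrib[symmetric] sum_distrib_left[symmetric] Q2_def P1_def marg2; auto intro!: sum.cong)
  also have "\<dots> = (\<Sum>c\<in>range g. \<Sum>b\<in>range f. P2 (b, c) * (P1 c / P1 c))"
    by (rule sum.swap)
  also have "\<dots> = (\<Sum>c\<in>range g. P1 c)"
    by (simp add: sum_distrib_right[symmetric] P2_def P1_def marg1; auto intro!: sum.cong)
  also have "\<dots> = (\<Sum>a\<in>UNIV. J a)" unfolding P1_def by (rule tot)
  finally show ?thesis .
qed

lemma cmi_nonneg:
  fixes f :: "'a::finite \<Rightarrow> 'b" and g :: "'a \<Rightarrow> 'c" and h :: "'a \<Rightarrow> 'd"
  assumes nn: "\<forall>x. J x \<ge> 0"
  shows "ent J (\<lambda>a. (f a, g a, h a)) - ent J (\<lambda>a. (g a, h a)) \<le> ent J (\<lambda>a. (f a, g a)) - ent J g"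
proof -
  define P3 where "P3 = dd J (\<lambda>a. (f a, g a, h a))"
  define P2 where "P2 = dd J (\<lambda>a. (f a, g a))"
  define Q2 where "Q2 = dd J (\<lambda>a. (g a, h a))"
  define P1 where "P1 = dd J g"
  define t where "t = (\<lambda>a. P2 (f a, g a) * Q2 (g a, h a) / (P3 (f a, g a, h a) * P1 (g a)))"
  have pw: "J a * (log 2 (P2 (f a, g a)) + log 2 (Q2 (g a, h a)) - log 2 (P3 (f a, g a, h a)) - log 2 (P1 (g a)))
        \<le> J a * (t a - 1) / ln 2" for a
  proof (cases "J a = 0")
    case False
    have p3: "P3 (f a, g a, h a) > 0" unfolding P3_def using dd_pos[OF nn False, of "\<lambda>a. (f a, g a, h a)"] by simp
    have p2: "P2 (f a, g a) > 0" unfolding P2_def using dd_pos[OF nn False, of "\<lambda>a. (f a, g a)"] by simp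
    have q2: "Q2 (g a, h a) > 0" unfolding Q2_def using dd_pos[OF nn False, of "\<lambda>a. (g a, h a)"] by simp
    have p1: "P1 (g a) > 0" unfolding P1_def using dd_pos[OF nn False, of g] by simp
    have tp: "t a > 0" unfolding t_def using p1 p2 p3 q2 by simp
    have "log 2 (P2 (f a, g a)) + log 2 (Q2 (g a, h a)) - log 2 (P3 (f a, g a, h a)) - log 2 (P1 (g a)) = log 2 (t a)"
      unfolding t_def using p1 p2 p3 q2 by (simp add: log_mult log_divide)
    also have "\<dots> = ln (t a) / ln 2" by (simp add: log_def)
    also have "\<dots> \<le> (t a - 1) / ln 2" using ln_le_minus_one[OF tp] by (simp add: divide_right_mono)
    finally have "log 2 (P2 (f a, g a)) + log 2 (Q2 (g a, h a)) - log 2 (P3 (f a, g a, h a)) - log 2 (P1 (g a)) \<le> (t a - 1) / ln 2" .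
    moreover have "J a \<ge> 0" using nn by simp
    ultimately show ?thesis by (metis mult_left_mono times_divide_eq_right)
  qed simp
  have "(\<Sum>a\<in>UNIV. J a * (log 2 (P2 (f a, g a)) + log 2 (Q2 (g a, h a)) - log 2 (P3 (f a, g a, h a)) - log 2 (P1 (g a))))
        \<le> (\<Sum>a\<in>UNIV. J a * (t a - 1) / ln 2)" by (rule sum_mono) (rule pw)
  also have "\<dots> = ((\<Sum>a\<in>UNIV. J a * t a) - (\<Sum>a\<in>UNIV. J a)) / ln 2"
    by (simp add: sum_divide_distrib[symmetric] right_diff_distrib sum_subtractf)
  also have "\<dots> \<le> 0"
    using key[OF nn, of f g h] unfolding t_def P3_def P2_def Q2_def P1_def
    by (simp add: divide_nonpos_pos)
  finally have main: "(\<Sum>a\<in>UNIV. J a * (log 2 (P2 (f a, g a)) + log 2 (Q2 (g a, h a)) - log 2 (P3 (f a, g a, h a)) - log 2 (P1 (g a)))) \<le> 0" .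
  have "(\<Sum>a\<in>UNIV. J a * (log 2 (P2 (f a, g a)) + log 2 (Q2 (g a, h a)) - log 2 (P3 (f a, g a, h a)) - log 2 (P1 (g a))))
     = (\<Sum>a\<in>UNIV. J a * log 2 (P2 (f a, g a))) + (\<Sum>a\<in>UNIV. J a * log 2 (Q2 (g a, h a)))
       - (\<Sum>a\<in>UNIV. J a * log 2 (P3 (f a, g a, h a))) - (\<Sum>a\<in>UNIV. J a * log 2 (P1 (g a)))"
    by (simp add: algebra_simps sum.distrib sum_subtractf)
  with main show ?thesis unfolding ent_pw P3_def P2_def Q2_def P1_def by simp
qed


lemma sum_UNIV_prod: "(\<Sum>a\<in>(UNIV::('a::finite \<times> 'b::finite) set). g a) = (\<Sum>x\<in>UNIV. \<Sum>y\<in>UNIV. g (x,y))"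
  by (simp add: sum.cartesian_product)
lemma dd_if: "dd J f b = (\<Sum>a\<in>UNIV. if f a = b then J a else 0)"
  unfolding dd_def by (simp add: sum.If_cases)
lemma if_conj0: "(if A \<and> B then t else (0::real)) = (if A then (if B then t else 0) else 0)" by simp
lemma sum_if_pull: "(\<Sum>x\<in>S. if P then f x else (0::real)) = (if P then sum f S else 0)" by simp

theorem lemma1:
  fixes s :: real
    and PX :: "'x1::finite \<times> 'x2::finite \<times> 'x3::finite \<times> 'y::finite \<Rightarrow> real"
    and Q1 :: "'x1 \<Rightarrow> 'u1::finite \<Rightarrow> real"
    and Q2 :: "'x2 \<Rightarrow> 'u2::finite \<Rightarrow> real"
    and Q3 :: "'x3 \<Rightarrow> 'u3::finite \<Rightarrow> real"
    and Q4 :: "'u2 \<times> 'u3 \<Rightarrow> 'u4::finite \<Rightarrow> real"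
    and J :: "'x1 \<times> 'x2 \<times> 'x3 \<times> 'y \<times> 'u1 \<times> 'u2 \<times> 'u3 \<times> 'u4 \<Rightarrow> real"
    and X1 :: "'x1 \<times> 'x2 \<times> 'x3 \<times> 'y \<times> 'u1 \<times> 'u2 \<times> 'u3 \<times> 'u4 \<Rightarrow> 'x1"
    and X2 X3 Y U1 U2 U3 U4
  assumes "s \<ge> 0"
    and "is_pmf PX" and "is_kernel Q1" and "is_kernel Q2" and "is_kernel Q3" and "is_kernel Q4"
    and J_def: "J = (\<lambda>(x1, x2, x3, y, u1, u2, u3, u4).
                  PX (x1, x2, x3, y) * Q1 x1 u1 * Q2 x2 u2 * Q3 x3 u3 * Q4 (u2, u3) u4)"
    and "X1 = (\<lambda>(x1, x2, x3, y, u1, u2, u3, u4). x1)"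
    and "X2 = (\<lambda>(x1, x2, x3, y, u1, u2, u3, u4). x2)"
    and "X3 = (\<lambda>(x1, x2, x3, y, u1, u2, u3, u4). x3)"
    and "Y = (\<lambda>(x1, x2, x3, y, u1, u2, u3, u4). y)"
    and "U1 = (\<lambda>(x1, x2, x3, y, u1, u2, u3, u4). u1)"
    and "U2 = (\<lambda>(x1, x2, x3, y, u1, u2, u3, u4). u2)"
    and "U3 = (\<lambda>(x1, x2, x3, y, u1, u2, u3, u4). u3)"
    and "U4 = (\<lambda>(x1, x2, x3, y, u1, u2, u3, u4). u4)"
  shows "- cond_ent J Y (\<lambda>w. (U1 w, U2 w, U3 w))
           - s * (mut_inf J (\<lambda>w. (X1 w, X2 w, X3 w)) (\<lambda>w. (U1 w, U2 w, U3 w))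
                  + cond_mut_inf J (\<lambda>w. (X2 w, X3 w)) (\<lambda>w. (U2 w, U3 w)) U1)
         \<ge> - cond_ent J Y (\<lambda>w. (U1 w, U4 w))
           - s * mut_inf J X1 U1
           - 2 * s * (mut_inf J X2 U2 + mut_inf J X3 U3)
           + 2 * s * (mut_inf J U2 U1 + mut_inf J U3 (\<lambda>w. (U1 w, U2 w)))"
proof -
  note Jd = assms(7)
  note fd = assms(8-15)
  have Q1n: "\<And>x u. Q1 x u \<ge> 0" and Q1s: "\<And>x. (\<Sum>u\<in>UNIV. Q1 x u) = 1"
    using assms(3) unfolding is_kernel_def is_pmf_def by auto
  have Q2n: "\<And>x u. Q2 x u \<ge> 0" and Q2s: "\<And>x. (\<Sum>u\<in>UNIV. Q2 x u) = 1"
    using assms(4) unfolding is_kernel_def is_pmf_def by auto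
  have Q3n: "\<And>x u. Q3 x u \<ge> 0" and Q3s: "\<And>x. (\<Sum>u\<in>UNIV. Q3 x u) = 1"
    using assms(5) unfolding is_kernel_def is_pmf_def by auto
  have Q4n: "\<And>x u. Q4 x u \<ge> 0" and Q4s: "\<And>x. (\<Sum>u\<in>UNIV. Q4 x u) = 1"
    using assms(6) unfolding is_kernel_def is_pmf_def by auto
  have PXn: "\<And>x. PX x \<ge> 0" using assms(2) unfolding is_pmf_def by auto
  note ks = Q1s Q2s Q3s Q4s
  have nn: "\<forall>x. J x \<ge> 0"
    by (auto simp: Jd PXn Q1n Q2n Q3n Q4n split: prod.splits intro!: mult_nonneg_nonneg)
  have posJ: "Q1 x1 u1 > 0 \<and> Q2 x2 u2 > 0 \<and> Q3 x3 u3 > 0 \<and> Q4 (u2,u3) u4 > 0"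
    if "J (x1, x2, x3, y, u1, u2, u3, u4) \<noteq> 0" for x1 x2 x3 y u1 u2 u3 u4
    using that Q1n[of x1 u1] Q2n[of x2 u2] Q3n[of x3 u3] Q4n[of "(u2,u3)" u4]
    by (auto simp: Jd order_less_le)
  define k1 where "k1 = (\<lambda>(x1::'x1, x2::'x2, x3::'x3, y::'y, u1::'u1, u2::'u2, u3::'u3, u4::'u4). Q1 x1 u1)"
  define k2 where "k2 = (\<lambda>(x1::'x1, x2::'x2, x3::'x3, y::'y, u1::'u1, u2::'u2, u3::'u3, u4::'u4). Q2 x2 u2)"
  define k3 where "k3 = (\<lambda>(x1::'x1, x2::'x2, x3::'x3, y::'y, u1::'u1, u2::'u2, u3::'u3, u4::'u4). Q3 x3 u3)"
  define k4 where "k4 = (\<lambda>(x1::'x1, x2::'x2, x3::'x3, y::'y, u1::'u1, u2::'u2, u3::'u3, u4::'u4). Q4 (u2,u3) u4)"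
  define L1 where "L1 = (\<Sum>a\<in>UNIV. J a * log 2 (k1 a))"
  define L2 where "L2 = (\<Sum>a\<in>UNIV. J a * log 2 (k2 a))"
  define L3 where "L3 = (\<Sum>a\<in>UNIV. J a * log 2 (k3 a))"
  define L4 where "L4 = (\<Sum>a\<in>UNIV. J a * log 2 (k4 a))"
  have kpos: "k1 a > 0 \<and> k2 a > 0 \<and> k3 a > 0 \<and> k4 a > 0" if "J a \<noteq> 0" for a
    using that posJ unfolding k1_def k2_def k3_def k4_def by (auto split: prod.splits)
  note ddsimps = dd_if sum_UNIV_prod if_conj0 sum_if_pull sum.delta sum.delta'
    sum_distrib_left[symmetric] sum_distrib_right[symmetric]

  have E1: "ent J (\<lambda>w. ((X1 w, X2 w, X3 w), (U1 w, U2 w, U3 w)))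
      = ent J (\<lambda>w. (X1 w, X2 w, X3 w)) - (L1 + L2 + L3)"
  proof -
    have "ent J (\<lambda>w. ((X1 w, X2 w, X3 w), (U1 w, U2 w, U3 w)))
      = ent J (\<lambda>w. (X1 w, X2 w, X3 w)) - (\<Sum>a\<in>UNIV. J a * log 2 (k1 a * k2 a * k3 a))"
    proof (rule ent_factor[OF nn])
      fix a assume Ja: "J a \<noteq> 0"
      obtain x1 x2 x3 y u1 u2 u3 u4 where a: "a = (x1, x2, x3, y, u1, u2, u3, u4)" by (cases a) auto
      show "dd J (\<lambda>w. ((X1 w, X2 w, X3 w), (U1 w, U2 w, U3 w))) ((X1 a, X2 a, X3 a), (U1 a, U2 a, U3 a))
           = dd J (\<lambda>w. (X1 w, X2 w, X3 w)) (X1 a, X2 a, X3 a) * (k1 a * k2 a * k3 a) \<and> k1 a * k2 a * k3 a > 0"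
        using kpos[OF Ja] unfolding a k1_def k2_def k3_def
        by (simp add: Jd fd ddsimps ks del: if_split)
    qed
    also have "(\<Sum>a\<in>UNIV. J a * log 2 (k1 a * k2 a * k3 a)) = L1 + L2 + L3"
      unfolding L1_def L2_def L3_def using kpos
      by (simp add: sum_log_mult)
    finally show ?thesis .
  qed

  have E2: "ent J (\<lambda>w. (X1 w, U1 w)) = ent J X1 - L1" unfolding L1_def
  proof (rule ent_factor[OF nn])
    fix a assume Ja: "J a \<noteq> 0"
    obtain x1 x2 x3 y u1 u2 u3 u4 where a: "a = (x1, x2, x3, y, u1, u2, u3, u4)" by (cases a) auto
    show "dd J (\<lambda>w. (X1 w, U1 w)) (X1 a, U1 a) = dd J X1 (X1 a) * k1 a \<and> k1 a > 0"
      using kpos[OF Ja] unfolding a k1_def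
      by (simp add: Jd fd ddsimps ks del: if_split; (simp add: mult_ac)?)
  qed
  have E3: "ent J (\<lambda>w. (X2 w, U2 w)) = ent J X2 - L2" unfolding L2_def
  proof (rule ent_factor[OF nn])
    fix a assume Ja: "J a \<noteq> 0"
    obtain x1 x2 x3 y u1 u2 u3 u4 where a: "a = (x1, x2, x3, y, u1, u2, u3, u4)" by (cases a) auto
    show "dd J (\<lambda>w. (X2 w, U2 w)) (X2 a, U2 a) = dd J X2 (X2 a) * k2 a \<and> k2 a > 0"
      using kpos[OF Ja] unfolding a k2_def
      by (simp add: Jd fd ddsimps ks del: if_split; (simp add: mult_ac)?)
  qed
  have E4: "ent J (\<lambda>w. (X3 w, U3 w)) = ent J X3 - L3" unfolding L3_def
  proof (rule ent_factor[OF nn])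
    fix a assume Ja: "J a \<noteq> 0"
    obtain x1 x2 x3 y u1 u2 u3 u4 where a: "a = (x1, x2, x3, y, u1, u2, u3, u4)" by (cases a) auto
    show "dd J (\<lambda>w. (X3 w, U3 w)) (X3 a, U3 a) = dd J X3 (X3 a) * k3 a \<and> k3 a > 0"
      using kpos[OF Ja] unfolding a k3_def
      by (simp add: Jd fd ddsimps ks del: if_split; (simp add: mult_ac)?)
  qed
  have E5: "ent J (\<lambda>w. ((X2 w, X3 w), (U2 w, U3 w), U1 w))
      = ent J (\<lambda>w. ((X2 w, X3 w), U1 w)) - (L2 + L3)"
  proof -
    have "ent J (\<lambda>w. ((X2 w, X3 w), (U2 w, U3 w), U1 w))
      = ent J (\<lambda>w. ((X2 w, X3 w), U1 w)) - (\<Sum>a\<in>UNIV. J a * log 2 (k2 a * k3 a))"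
    proof (rule ent_factor[OF nn])
      fix a assume Ja: "J a \<noteq> 0"
      obtain x1 x2 x3 y u1 u2 u3 u4 where a: "a = (x1, x2, x3, y, u1, u2, u3, u4)" by (cases a) auto
      show "dd J (\<lambda>w. ((X2 w, X3 w), (U2 w, U3 w), U1 w)) ((X2 a, X3 a), (U2 a, U3 a), U1 a)
           = dd J (\<lambda>w. ((X2 w, X3 w), U1 w)) ((X2 a, X3 a), U1 a) * (k2 a * k3 a) \<and> k2 a * k3 a > 0"
        using kpos[OF Ja] unfolding a k2_def k3_def
        by (simp add: Jd fd ddsimps ks del: if_split; (simp add: mult_ac)?)
    qed
    also have "(\<Sum>a\<in>UNIV. J a * log 2 (k2 a * k3 a)) = L2 + L3"
      unfolding L2_def L3_def using kpos
      by (simp add: sum_log_mult)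
    finally show ?thesis .
  qed
  have E6: "ent J (\<lambda>w. (Y w, (U1 w, U4 w), (U2 w, U3 w))) = ent J (\<lambda>w. (Y w, U1 w, U2 w, U3 w)) - L4"
    unfolding L4_def
  proof (rule ent_factor[OF nn])
    fix a assume Ja: "J a \<noteq> 0"
    obtain x1 x2 x3 y u1 u2 u3 u4 where a: "a = (x1, x2, x3, y, u1, u2, u3, u4)" by (cases a) auto
    show "dd J (\<lambda>w. (Y w, (U1 w, U4 w), (U2 w, U3 w))) (Y a, (U1 a, U4 a), (U2 a, U3 a))
       = dd J (\<lambda>w. (Y w, U1 w, U2 w, U3 w)) (Y a, U1 a, U2 a, U3 a) * k4 a \<and> k4 a > 0"
      using kpos[OF Ja] unfolding a k4_def
      by (simp add: Jd fd ddsimps ks del: if_split; (simp add: mult_ac)?)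
  qed
  have E7: "ent J (\<lambda>w. ((U1 w, U4 w), (U2 w, U3 w))) = ent J (\<lambda>w. (U1 w, U2 w, U3 w)) - L4"
    unfolding L4_def
  proof (rule ent_factor[OF nn])
    fix a assume Ja: "J a \<noteq> 0"
    obtain x1 x2 x3 y u1 u2 u3 u4 where a: "a = (x1, x2, x3, y, u1, u2, u3, u4)" by (cases a) auto
    show "dd J (\<lambda>w. ((U1 w, U4 w), (U2 w, U3 w))) ((U1 a, U4 a), (U2 a, U3 a))
       = dd J (\<lambda>w. (U1 w, U2 w, U3 w)) (U1 a, U2 a, U3 a) * k4 a \<and> k4 a > 0"
      using kpos[OF Ja] unfolding a k4_def
      by (simp add: Jd fd ddsimps ks del: if_split; (simp add: mult_ac)?)
  qed
  have C: "ent J (\<lambda>w. (Y w, (U1 w, U4 w), (U2 w, U3 w))) - ent J (\<lambda>w. ((U1 w, U4 w), (U2 w, U3 w)))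
      \<le> ent J (\<lambda>w. (Y w, U1 w, U4 w)) - ent J (\<lambda>w. (U1 w, U4 w))"
    using cmi_nonneg[OF nn, of Y "\<lambda>w. (U1 w, U4 w)" "\<lambda>w. (U2 w, U3 w)"] by simp
  have I1: "ent J (\<lambda>w. ((U2 w, U3 w), U1 w)) = ent J (\<lambda>w. (U1 w, U2 w, U3 w))"
    by (rule ent_cong) auto
  have I2: "ent J (\<lambda>w. (U2 w, U1 w)) = ent J (\<lambda>w. (U1 w, U2 w))"
    by (rule ent_cong) auto
  have I3: "ent J (\<lambda>w. (U3 w, U1 w, U2 w)) = ent J (\<lambda>w. (U1 w, U2 w, U3 w))"
    by (rule ent_cong) auto
  have B: "mut_inf J (\<lambda>w. (X1 w, X2 w, X3 w)) (\<lambda>w. (U1 w, U2 w, U3 w))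
                  + cond_mut_inf J (\<lambda>w. (X2 w, X3 w)) (\<lambda>w. (U2 w, U3 w)) U1
      = mut_inf J X1 U1 + 2 * (mut_inf J X2 U2 + mut_inf J X3 U3)
        - 2 * (mut_inf J U2 U1 + mut_inf J U3 (\<lambda>w. (U1 w, U2 w)))"
    unfolding mut_inf_def cond_mut_inf_def using E1 E2 E3 E4 E5 I1 I2 I3 by simp
  have T: "cond_ent J Y (\<lambda>w. (U1 w, U2 w, U3 w)) \<le> cond_ent J Y (\<lambda>w. (U1 w, U4 w))"
    unfolding cond_ent_def using C E6 E7 by simp
  have Bs: "s * (mut_inf J (\<lambda>w. (X1 w, X2 w, X3 w)) (\<lambda>w. (U1 w, U2 w, U3 w))
                  + cond_mut_inf J (\<lambda>w. (X2 w, X3 w)) (\<lambda>w. (U2 w, U3 w)) U1)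
      = s * mut_inf J X1 U1 + 2 * s * (mut_inf J X2 U2 + mut_inf J X3 U3)
        - 2 * s * (mut_inf J U2 U1 + mut_inf J U3 (\<lambda>w. (U1 w, U2 w)))"
    by (subst B) (simp add: algebra_simps)
  show ?thesis using Bs T by linarith
qed

end
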